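(* Over a field of characteristic $0$, write $[a,b]=ab-ba$ and $\{a,b\}=ab+ba$. An algebra is left-symmetric and satisfies $(ab)c+(ba)c+(ac)b+(ca)b+(bc)a+(cb)a=0$ if and only if, in terms of $[\cdot,\cdot]$ and $\{\cdot,\cdot\}$, it satisfies \[ [[a,b],c]+[[b,c],a]+[[c,a],b]=0, \] \[ \{\{a,b\},c\}=-\{[a,b],c\}-2\{[a,c],b\}+[\{a,b\},c]-[[a,c],b]+\{a,\{b,c\}\}-\{a,[b,c]\}+[a,\{b,c\}], \] and \[ \{a,\{b,c\}\}=\{[a,b],c\}+\{[a,c],b\}-\tfrac32[\{a,b\},c]-\tfrac32[\{a,c\},b]+\tfrac32[[a,c],b]-\tfrac13[a,\{b,c\}]+\tfrac13[a,[b,c]]. \]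
   Context: A left-symmetric algebra is an algebra whose associator $(a,b,c)=(ab)c-a(bc)$ satisfies $(a,b,c)=(b,a,c)$. The statement is the polarization (Markl–Remm) of this variety. *)

theory Defs
  imports Complex_Main
begin

definition bilinear_mult :: "('k::field \<Rightarrow> 'v::ab_group_add \<Rightarrow> 'v) \<Rightarrow> ('v \<Rightarrow> 'v \<Rightarrow> 'v) \<Rightarrow> bool" where
  "bilinear_mult s m \<longleftrightarrow>
     (\<forall>x y z. m (x + y) z = m x z + m y z) \<and>
     (\<forall>x y z. m x (y + z) = m x y + m x z) \<and>
     (\<forall>c x y. m (s c x) y = s c (m x y)) \<and>
     (\<forall>c x y. m x (s c y) = s c (m x y))"

definition assoc :: "('v \<Rightarrow> 'v \<Rightarrow> 'v) \<Rightarrow> 'v \<Rightarrow> 'v \<Rightarrow> 'v \<Rightarrow> 'v::ab_group_add" where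
  "assoc m a b c = m (m a b) c - m a (m b c)"

definition left_symmetric :: "('v \<Rightarrow> 'v \<Rightarrow> 'v::ab_group_add) \<Rightarrow> bool" where
  "left_symmetric m \<longleftrightarrow> (\<forall>a b c. assoc m a b c = assoc m b a c)"

definition comm :: "('v \<Rightarrow> 'v \<Rightarrow> 'v::ab_group_add) \<Rightarrow> 'v \<Rightarrow> 'v \<Rightarrow> 'v" where
  "comm m a b = m a b - m b a"

definition acomm :: "('v \<Rightarrow> 'v \<Rightarrow> 'v::ab_group_add) \<Rightarrow> 'v \<Rightarrow> 'v \<Rightarrow> 'v" where
  "acomm m a b = m a b + m b a"

end

theory Submission
  imports Defs
begin

lemma bl:
  assumes "bilinear_mult s m"
  shows "m (x+y) z = m x z + m y z" "m x (y+z) = m x y + m x z"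
    "m (x-y) z = m x z - m y z" "m x (y-z) = m x y - m x z"
    "m (-x) z = - m x z" "m x (-y) = - m x y"
proof -
  have A: "\<And>x y z. m (x + y) z = m x z + m y z" and B: "\<And>x y z. m x (y + z) = m x y + m x z"
    using assms unfolding bilinear_mult_def by auto
  show "m (x+y) z = m x z + m y z" "m x (y+z) = m x y + m x z" by (rule A, rule B)
  have C: "m (x-y) z = m x z - m y z" for x y z
    using A[of "x-y" y z] by (simp add: algebra_simps)
  have D: "m x (y-z) = m x y - m x z" for x y z
    using B[of x "y-z" z] by (simp add: algebra_simps)
  show "m (x-y) z = m x z - m y z" "m x (y-z) = m x y - m x z" by (rule C, rule D)
  show "m (-x) z = - m x z" using C[of 0 x z] C[of 0 0 z] by simp
  show "m x (-y) = - m x y" using D[of x 0 y] D[of x 0 0] by simp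
qed

definition "LSd m a b c = assoc m a b c - assoc m b a c"
definition "SIXd m a b c = m (m a b) c + m (m b a) c + m (m a c) b + m (m c a) b
                     + m (m b c) a + m (m c b) a"
definition "JACd m a b c = comm m (comm m a b) c + comm m (comm m b c) a + comm m (comm m c a) b"
definition "R2d m a b c = acomm m (acomm m a b) c - (
              - acomm m (comm m a b) c - (acomm m (comm m a c) b + acomm m (comm m a c) b)
              + comm m (acomm m a b) c - comm m (comm m a c) b
              + acomm m a (acomm m b c) - acomm m a (comm m b c) + comm m a (acomm m b c))"
definition "R3d m a b c = acomm m a (acomm m b c) + acomm m a (acomm m b c) + acomm m a (acomm m b c) - (
              acomm m (comm m a b) c + acomm m (comm m a b) c + acomm m (comm m a b) c
              + acomm m (comm m a c) b + acomm m (comm m a c) b + acomm m (comm m a c) b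
              - (comm m (acomm m a b) c + comm m (acomm m a b) c)
              - (comm m (acomm m a c) b + comm m (acomm m a c) b)
              + (comm m (comm m a c) b + comm m (comm m a c) b)
              - comm m a (acomm m b c) + comm m a (comm m b c))"

lemmas U = LSd_def SIXd_def JACd_def R2d_def R3d_def assoc_def comm_def acomm_def

lemma i1: assumes "bilinear_mult s m"
  shows "JACd m a b c = LSd m a b c - LSd m a c b + LSd m b c a"
  unfolding U by (simp add: bl[OF assms] algebra_simps)

lemma i2: assumes "bilinear_mult s m"
  shows "R2d m a b c = LSd m a b c + (LSd m a c b + LSd m a c b + LSd m a c b) + LSd m b c a"
  unfolding U by (simp add: bl[OF assms] algebra_simps)

lemma i3: assumes "bilinear_mult s m"
  shows "R3d m a b c = (SIXd m a b c + SIXd m a b c) + LSd m b c a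
     - (LSd m a b c + LSd m a b c + LSd m a b c)
     - (LSd m a c b + LSd m a c b + LSd m a c b + LSd m a c b + LSd m a c b)"
  unfolding U by (simp add: bl[OF assms] algebra_simps)

lemma i4: assumes "bilinear_mult s m"
  shows "LSd m a b c + LSd m a b c + LSd m a b c + LSd m a b c = JACd m a b c + R2d m a c b"
  unfolding U by (simp add: bl[OF assms] algebra_simps)

lemma i5: assumes "bilinear_mult s m"
  shows "SIXd m a b c + SIXd m a b c = R2d m a b c + R2d m a c b + R3d m a b c - JACd m a b c"
  unfolding U by (simp add: bl[OF assms] algebra_simps)

lemma (in vector_space) s2: "scale 2 x = x + x"
  using scale_left_distrib[of 1 1 x] by (simp add: one_add_one)
lemma (in vector_space) s3: "scale 3 x = x + x + x"
proof -
  have "(3::'a) = 2 + 1" by simp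
  then show ?thesis using scale_left_distrib[of 2 1 x] s2 by simp
qed
lemma (in vector_space) s4: "scale 4 x = x + x + x + x"
proof -
  have "(4::'a) = 3 + 1" by simp
  then show ?thesis using scale_left_distrib[of 3 1 x] s3 by simp
qed

lemma c2: assumes "vector_space (s::'k::field_char_0 \<Rightarrow> 'v::ab_group_add \<Rightarrow> 'v)" "(x::'v) + x = 0" shows "x = 0"
proof -
  interpret vector_space s by fact
  have "s 2 x = 0" using assms(2) s2 by simp
  then show ?thesis by simp
qed
lemma c4: assumes "vector_space (s::'k::field_char_0 \<Rightarrow> 'v::ab_group_add \<Rightarrow> 'v)" "(x::'v) + x + x + x = 0" shows "x = 0"
proof -
  interpret vector_space s by fact
  have "s 4 x = 0" using assms(2) s4 by simp
  then show ?thesis by simp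
qed

lemma r2_iff: assumes "vector_space (s::'k::field_char_0 \<Rightarrow> 'v::ab_group_add \<Rightarrow> 'v)"
  shows "(acomm m (acomm m a b) c =
              - acomm m (comm m a b) c - s 2 (acomm m (comm m a c) b)
              + comm m (acomm m a b) c - comm m (comm m a c) b
              + acomm m a (acomm m b c) - acomm m a (comm m b c) + comm m a (acomm m b c))
   \<longleftrightarrow> R2d m a b c = 0"
proof -
  interpret vector_space s by fact
  show ?thesis unfolding R2d_def s2 by (rule eq_iff_diff_eq_0)
qed

lemma r3_iff: assumes "vector_space (s::'k::field_char_0 \<Rightarrow> 'v::ab_group_add \<Rightarrow> 'v)"
  shows "(acomm m a (acomm m b c) =
              acomm m (comm m a b) c + acomm m (comm m a c) b
              - s (2/3) (comm m (acomm m a b) c) - s (2/3) (comm m (acomm m a c) b)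
              + s (2/3) (comm m (comm m a c) b)
              - s (1/3) (comm m a (acomm m b c)) + s (1/3) (comm m a (comm m b c)))
   \<longleftrightarrow> R3d m a b c = 0" (is "?X = ?Y \<longleftrightarrow> _")
proof -
  interpret vector_space s by fact
  have "?X = ?Y \<longleftrightarrow> s 3 ?X = s 3 ?Y" by simp
  also have "s 3 ?Y = s 3 (acomm m (comm m a b) c) + s 3 (acomm m (comm m a c) b)
              - s 2 (comm m (acomm m a b) c) - s 2 (comm m (acomm m a c) b)
              + s 2 (comm m (comm m a c) b)
              - (comm m a (acomm m b c)) + (comm m a (comm m b c))"
  proof -
    have n: "(3::'k) * (2/3) = 2" "(3::'k) * (1/3) = 1" by simp_all
    show ?thesis by (simp only: scale_right_distrib scale_right_diff_distrib scale_scale n scale_one)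
  qed
  finally show ?thesis unfolding R3d_def s2 s3 eq_iff_diff_eq_0[symmetric] by (simp only: add.assoc)
qed

theorem mainTheorem13:
  fixes scale :: "'k::field_char_0 \<Rightarrow> 'v::ab_group_add \<Rightarrow> 'v"
    and m :: "'v \<Rightarrow> 'v \<Rightarrow> 'v"
  assumes "vector_space scale"
    and "bilinear_mult scale m"
  shows "(left_symmetric m \<and>
          (\<forall>a b c. m (m a b) c + m (m b a) c + m (m a c) b + m (m c a) b
                     + m (m b c) a + m (m c b) a = 0))
     \<longleftrightarrow>
         ((\<forall>a b c. comm m (comm m a b) c + comm m (comm m b c) a + comm m (comm m c a) b = 0) \<and>
          (\<forall>a b c. acomm m (acomm m a b) c =
              - acomm m (comm m a b) c - scale 2 (acomm m (comm m a c) b)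
              + comm m (acomm m a b) c - comm m (comm m a c) b
              + acomm m a (acomm m b c) - acomm m a (comm m b c) + comm m a (acomm m b c)) \<and>
          (\<forall>a b c. acomm m a (acomm m b c) =
              acomm m (comm m a b) c + acomm m (comm m a c) b
              - scale (2/3) (comm m (acomm m a b) c) - scale (2/3) (comm m (acomm m a c) b)
              + scale (2/3) (comm m (comm m a c) b)
              - scale (1/3) (comm m a (acomm m b c)) + scale (1/3) (comm m a (comm m b c))))"
proof -
  interpret vector_space scale by fact
  note B = assms(2)
  have ls: "left_symmetric m \<longleftrightarrow> (\<forall>a b c. LSd m a b c = 0)"
    unfolding left_symmetric_def LSd_def by simp
  have six: "(\<forall>a b c. m (m a b) c + m (m b a) c + m (m a c) b + m (m c a) b
                     + m (m b c) a + m (m c b) a = 0) \<longleftrightarrow> (\<forall>a b c. SIXd m a b c = 0)"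
    unfolding SIXd_def by simp
  have jac: "(\<forall>a b c. comm m (comm m a b) c + comm m (comm m b c) a + comm m (comm m c a) b = 0)
     \<longleftrightarrow> (\<forall>a b c. JACd m a b c = 0)" unfolding JACd_def by simp
  show ?thesis
    unfolding ls six jac r2_iff[OF assms(1)] r3_iff[OF assms(1)]
  proof safe
    fix a b c
    assume L: "\<forall>a b c. LSd m a b c = 0" and S: "\<forall>a b c. SIXd m a b c = 0"
    show "JACd m a b c = 0" using i1[OF B] L by simp
    show "R2d m a b c = 0" using i2[OF B] L by simp
    show "R3d m a b c = 0" using i3[OF B] L S by simp
  next
    fix a b c
    assume J: "\<forall>a b c. JACd m a b c = 0" and R2: "\<forall>a b c. R2d m a b c = 0"
      and R3: "\<forall>a b c. R3d m a b c = 0"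
    show "LSd m a b c = 0" by (rule c4[OF assms(1)]) (use i4[OF B, of a b c] J R2 in simp)
    show "SIXd m a b c = 0" by (rule c2[OF assms(1)]) (use i5[OF B, of a b c] J R2 R3 in simp)
  qed
qed

end
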